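(* Let $A = \langle Q,\Sigma,F,\delta\rangle$ be a tree automaton and $R$ a left-linear term rewriting system over $\Sigma$. Suppose that for every rule $\ell \to r \in R$, every assignment $\alpha : \mathcal{X} \to Q$ and every $q \in Q$: if $\ell\alpha \rightsquigarrow_A^* q$, then there exists a term $t$ with $\ell \to_R^+ t$ and $t\alpha \rightsquigarrow_A^* q$. Then $L(A)$ is weakly closed under rewriting with respect to $R$, i.e. for every $s \in L(A)$ that is not a normal form of $\to_R$ there exists $s' \in L(A)$ with $s \to_R^+ s'$.
   Context: A tree automaton $A=\langle Q,\Sigma,F,\delta\rangle$ consists of a finite set of states $Q$, a finite signature $\Sigma$, final states $F\subseteq Q$, and transition rules $f(q_1,\ldots,q_n)\rightsquigarrow q$ ($f\in\Sigma$ of arity $n$, $q_i,q\in Q$). The relation $\rightsquigarrow_A$ is the rewrite relation on terms over $\Sigma\cup Q$ (states as constants) generated by these rules in arbitrary contexts, and $\rightsquigarrow_A^*$ its reflexive-transitive closure. $L(A)$ is the set of ground terms $t$ over $\Sigma$ with $t\rightsquigarrow_A^* q$ for some $q\in F$. $\mathcal{X}$ is the set of variables; for $\alpha:\mathcal{X}\to Q$ and a term $u$, $u\alpha$ is the term over $\Sigma\cup Q$ obtained by replacing each variable $x$ by $\alpha(x)$. A term rewriting system $R$ is a set of rules $\ell\to r$ ($\ell$ not a variable, variables of $r$ among those of $\ell$); $\to_R$ is the induced one-step rewrite relation, $\to_R^+$ its transitive closure; it is left-linear if no variable occurs more than once in any left-hand side. A normal form is a term with no $\to_R$-step. *)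

theory Defs
  imports Main
begin

datatype ('f, 'v) "term" = Var 'v | Fun 'f "('f, 'v) term list"

fun vars_term :: "('f, 'v) term \<Rightarrow> 'v set" where
  "vars_term (Var x) = {x}"
| "vars_term (Fun f ts) = \<Union> (set (map vars_term ts))"

fun subst_apply :: "('f, 'v) term \<Rightarrow> ('v \<Rightarrow> ('f, 'w) term) \<Rightarrow> ('f, 'w) term" where
  "subst_apply (Var x) \<sigma> = \<sigma> x"
| "subst_apply (Fun f ts) \<sigma> = Fun f (map (\<lambda>t. subst_apply t \<sigma>) ts)"

fun wf_term :: "('f \<times> nat) set \<Rightarrow> ('f, 'v) term \<Rightarrow> bool" where
  "wf_term \<Sigma> (Var x) = True"
| "wf_term \<Sigma> (Fun f ts) = ((f, length ts) \<in> \<Sigma> \<and> (\<forall>t \<in> set ts. wf_term \<Sigma> t))"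

definition ground :: "('f, 'v) term \<Rightarrow> bool" where
  "ground t \<longleftrightarrow> vars_term t = {}"

inductive_set rstep :: "(('f, 'v) term \<times> ('f, 'v) term) set \<Rightarrow> (('f, 'v) term \<times> ('f, 'v) term) set"
  for R where
  root: "(l, r) \<in> R \<Longrightarrow> (subst_apply l \<sigma>, subst_apply r \<sigma>) \<in> rstep R"
| ctxt: "(s, t) \<in> rstep R \<Longrightarrow> (Fun f (ss @ s # ts), Fun f (ss @ t # ts)) \<in> rstep R"

definition is_trs :: "(('f, 'v) term \<times> ('f, 'v) term) set \<Rightarrow> bool" where
  "is_trs R \<longleftrightarrow> (\<forall>(l, r) \<in> R. (\<forall>x. l \<noteq> Var x) \<and> vars_term r \<subseteq> vars_term l)"

definition trs_over :: "('f \<times> nat) set \<Rightarrow> (('f, 'v) term \<times> ('f, 'v) term) set \<Rightarrow> bool" where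
  "trs_over \<Sigma> R \<longleftrightarrow> (\<forall>(l, r) \<in> R. wf_term \<Sigma> l \<and> wf_term \<Sigma> r)"

fun linear_term :: "('f, 'v) term \<Rightarrow> bool" where
  "linear_term (Var x) = True"
| "linear_term (Fun f ts) = ((\<forall>i < length ts. \<forall>j < length ts. i \<noteq> j \<longrightarrow> vars_term (ts ! i) \<inter> vars_term (ts ! j) = {}) \<and> (\<forall>t \<in> set ts. linear_term t))"

definition left_linear :: "(('f, 'v) term \<times> ('f, 'v) term) set \<Rightarrow> bool" where
  "left_linear R \<longleftrightarrow> (\<forall>(l, r) \<in> R. linear_term l)"

definition NF :: "('a \<times> 'a) set \<Rightarrow> 'a set" where
  "NF S = {s. \<nexists>t. (s, t) \<in> S}"

record ('q, 'f) ta =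
  states :: "'q set"
  sig :: "('f \<times> nat) set"
  final :: "'q set"
  delta :: "('f \<times> 'q list \<times> 'q) set"   \<comment> \<open>(f, [q1..qn], q) encodes f(q1,...,qn) \<leadsto> q\<close>

definition wf_ta :: "('q, 'f) ta \<Rightarrow> bool" where
  "wf_ta A \<longleftrightarrow> finite (states A) \<and> finite (sig A) \<and> final A \<subseteq> states A \<and>
     (\<forall>(f, qs, q) \<in> delta A. (f, length qs) \<in> sig A \<and> set qs \<subseteq> states A \<and> q \<in> states A)"

text \<open>Terms over \<Sigma> \<union> Q: symbols are Inl f (f \<in> \<Sigma>) or Inr q (a state, used as a constant).\<close>
abbreviation st :: "'q \<Rightarrow> ('f + 'q, 'v) term" where
  "st q \<equiv> Fun (Inr q) []"

definition ta_rules :: "('q, 'f) ta \<Rightarrow> (('f + 'q, 'v) term \<times> ('f + 'q, 'v) term) set" where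
  "ta_rules A = {(Fun (Inl f) (map st qs), st q) | f qs q. (f, qs, q) \<in> delta A}"

definition ta_move :: "('q, 'f) ta \<Rightarrow> (('f + 'q, 'v) term \<times> ('f + 'q, 'v) term) set" where
  "ta_move A = rstep (ta_rules A)"

fun lift :: "('f, 'v) term \<Rightarrow> ('f + 'q, 'v) term" where
  "lift (Var x) = Var x"
| "lift (Fun f ts) = Fun (Inl f) (map lift ts)"

fun inst_states :: "('f, 'v) term \<Rightarrow> ('v \<Rightarrow> 'q) \<Rightarrow> ('f + 'q, 'v) term" where
  "inst_states (Var x) \<alpha> = st (\<alpha> x)"
| "inst_states (Fun f ts) \<alpha> = Fun (Inl f) (map (\<lambda>t. inst_states t \<alpha>) ts)"

definition lang :: "('q, 'f) ta \<Rightarrow> ('f, 'v) term set" where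
  "lang A = {t. ground t \<and> wf_term (sig A) t \<and>
                (\<exists>q \<in> final A. (lift t, st q) \<in> (ta_move A)\<^sup>*)}"

definition weakly_closed :: "('f, 'v) term set \<Rightarrow> (('f, 'v) term \<times> ('f, 'v) term) set \<Rightarrow> bool" where
  "weakly_closed L R \<longleftrightarrow>
     (\<forall>s \<in> L. s \<notin> NF (rstep R) \<longrightarrow> (\<exists>s' \<in> L. (s, s') \<in> (rstep R)\<^sup>+))"

end

theory Submission
  imports Defs
begin

lemma subst_subst: "subst_apply (subst_apply t \<sigma>) \<tau> = subst_apply t (\<lambda>x. subst_apply (\<sigma> x) \<tau>)"
  by (induction t) auto

lemma vars_subst: "vars_term (subst_apply t \<sigma>) = \<Union> ((\<lambda>x. vars_term (\<sigma> x)) ` vars_term t)"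
  by (induction t) auto

lemma rstep_subst: "(s, t) \<in> rstep R \<Longrightarrow> (subst_apply s \<tau>, subst_apply t \<tau>) \<in> rstep R"
proof (induction rule: rstep.induct)
  case (root l r \<sigma>)
  then show ?case using rstep.root[OF root, of "\<lambda>x. subst_apply (\<sigma> x) \<tau>"] by (simp add: subst_subst)
next
  case (ctxt s t f ss ts)
  then show ?case using rstep.ctxt[OF ctxt(2), of f "map (\<lambda>t. subst_apply t \<tau>) ss" "map (\<lambda>t. subst_apply t \<tau>) ts"]
    by simp
qed

lemma rsteps_subst: "(s, t) \<in> (rstep R)\<^sup>+ \<Longrightarrow> (subst_apply s \<tau>, subst_apply t \<tau>) \<in> (rstep R)\<^sup>+"
proof (induction rule: trancl_induct)
  case (base y) then show ?case using rstep_subst by blast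
next
  case (step y z) then show ?case using rstep_subst by (meson trancl.simps)
qed

lemma rsteps_ctxt: "(s, t) \<in> (rstep R)\<^sup>+ \<Longrightarrow> (Fun f (ss @ s # ts), Fun f (ss @ t # ts)) \<in> (rstep R)\<^sup>+"
proof (induction rule: trancl_induct)
  case (base y) then show ?case using rstep.ctxt by (meson r_into_trancl)
next
  case (step y z) then show ?case using rstep.ctxt by (meson trancl.simps)
qed

lemma rstep_vars:
  assumes "is_trs R"
  shows "(s, t) \<in> rstep R \<Longrightarrow> vars_term t \<subseteq> vars_term s"
proof (induction rule: rstep.induct)
  case (root l r \<sigma>)
  then have "vars_term r \<subseteq> vars_term l" using assms unfolding is_trs_def by auto
  then show ?case by (auto simp: vars_subst)
next
  case (ctxt s t f ss ts)
  then show ?case by auto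
qed

lemma rsteps_vars:
  assumes "is_trs R"
  shows "(s, t) \<in> (rstep R)\<^sup>+ \<Longrightarrow> vars_term t \<subseteq> vars_term s"
  by (induction rule: trancl_induct) (use rstep_vars[OF assms] in blast)+

lemma rsteps_star_ctxt: "(s, t) \<in> (rstep S)\<^sup>* \<Longrightarrow> (Fun f (ss @ s # ts), Fun f (ss @ t # ts)) \<in> (rstep S)\<^sup>*"
proof (induction rule: rtrancl_induct)
  case base then show ?case by simp
next
  case (step y z) then show ?case using rstep.ctxt by (meson rtrancl.simps)
qed

lemma rsteps_args_gen:
  "list_all2 (\<lambda>a b. (a, b) \<in> (rstep S)\<^sup>*) xs ys \<Longrightarrow> (Fun g (ps @ xs), Fun g (ps @ ys)) \<in> (rstep S)\<^sup>*"
proof (induction xs ys arbitrary: ps rule: list_all2_induct)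
  case Nil then show ?case by simp
next
  case (Cons x xs y ys)
  have "(Fun g (ps @ x # xs), Fun g (ps @ y # xs)) \<in> (rstep S)\<^sup>*"
    using rsteps_star_ctxt[OF Cons(1)] by blast
  moreover have "(Fun g ((ps @ [y]) @ xs), Fun g ((ps @ [y]) @ ys)) \<in> (rstep S)\<^sup>*"
    using Cons(3) by blast
  ultimately show ?case by simp
qed

lemma rsteps_args:
  "list_all2 (\<lambda>a b. (a, b) \<in> (rstep S)\<^sup>*) xs ys \<Longrightarrow> (Fun g xs, Fun g ys) \<in> (rstep S)\<^sup>*"
  using rsteps_args_gen[of S xs ys g "[]"] by simp

lemma ta_rule_step: "(f, qs, q) \<in> delta A \<Longrightarrow> (Fun (Inl f) (map st qs), st q) \<in> ta_move A"
proof -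
  assume a: "(f, qs, q) \<in> delta A"
  have "(subst_apply (Fun (Inl f) (map st qs)) Var, subst_apply (st q) Var) \<in> rstep (ta_rules A)"
    by (rule rstep.root) (use a in \<open>auto simp: ta_rules_def\<close>)
  then show ?thesis by (simp add: ta_move_def o_def)
qed

lemma st_NF: "(st q, y) \<notin> rstep (ta_rules A)"
proof
  assume "(st q, y) \<in> rstep (ta_rules A)"
  then show False
    by (cases rule: rstep.cases) (auto simp: ta_rules_def)
qed

lemma st_steps: "(st q', st q) \<in> (ta_move A)\<^sup>* \<Longrightarrow> q' = q"
  by (erule converse_rtranclE) (use st_NF in \<open>fastforce simp: ta_move_def\<close>)+

lemma dec:
  assumes "(x, st q) \<in> (ta_move A)\<^sup>*"
  shows "x = Fun (Inl f) ts \<Longrightarrow> \<exists>qs. (f, qs, q) \<in> delta A \<and> length qs = length ts \<and>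
     (\<forall>i<length ts. (ts ! i, st (qs ! i)) \<in> (ta_move A)\<^sup>*)"
  using assms
proof (induction arbitrary: ts rule: converse_rtrancl_induct)
  case base then show ?case by simp
next
  case (step x y)
  from step(1) have "(x, y) \<in> rstep (ta_rules A)" by (simp add: ta_move_def)
  then show ?case
  proof (cases rule: rstep.cases)
    case (root l r \<sigma>)
    then obtain g qs' q'' where r: "l = Fun (Inl g) (map st qs')" "r = st q''" "(g, qs', q'') \<in> delta A"
      by (auto simp: ta_rules_def)
    with root step(4) have "ts = map st qs'" "g = f" by (auto simp: o_def)
    moreover have "q'' = q" using st_steps step(2) root r by simp
    ultimately show ?thesis using r by auto
  next
    case (ctxt s t g ss vs)
    with step(4) have eq: "g = Inl f" "ts = ss @ s # vs" by auto
    from step(3)[of "ss @ t # vs"] ctxt eq obtain qs where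
      qs: "(f, qs, q) \<in> delta A" "length qs = length (ss @ t # vs)"
        "\<forall>i<length (ss @ t # vs). ((ss @ t # vs) ! i, st (qs ! i)) \<in> (ta_move A)\<^sup>*" by auto
    have "\<forall>i<length ts. (ts ! i, st (qs ! i)) \<in> (ta_move A)\<^sup>*"
    proof (intro allI impI)
      fix i assume i: "i < length ts"
      show "(ts ! i, st (qs ! i)) \<in> (ta_move A)\<^sup>*"
      proof (cases "i = length ss")
        case True
        then have "(t, st (qs ! i)) \<in> (ta_move A)\<^sup>*" using qs(3)[rule_format, of i] i eq by (auto simp: nth_append)
        moreover have "(s, t) \<in> ta_move A" using ctxt by (simp add: ta_move_def)
        ultimately show ?thesis using True eq by (simp add: nth_append converse_rtrancl_into_rtrancl)
      next
        case False
        then have "(ss @ t # vs) ! i = ts ! i" using eq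
          by (auto simp: nth_append nth_Cons' split: if_splits)
        then show ?thesis using qs(3) i eq by auto
      qed
    qed
    then show ?thesis using qs eq by auto
  qed
qed

lemma states_of_run:
  assumes "wf_ta A" "(f, qs, q) \<in> delta A"
  shows "set qs \<subseteq> states A" "(f, length qs) \<in> sig A"
  using assms unfolding wf_ta_def by auto

lemma run_wf:
  assumes "wf_ta A"
  shows "(lift u, st q) \<in> (ta_move A)\<^sup>* \<Longrightarrow> wf_term (sig A) u"
proof (induction u arbitrary: q)
  case (Var x) then show ?case by simp
next
  case (Fun g us)
  from dec[OF Fun(2), of g "map lift us"] obtain qs where
    qs: "(g, qs, q) \<in> delta A" "length qs = length us"
      "\<forall>i<length us. (lift (us ! i), st (qs ! i)) \<in> (ta_move A)\<^sup>*" by auto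
  have "\<forall>t\<in>set us. wf_term (sig A) t"
  proof
    fix t assume "t \<in> set us"
    then obtain i where "i < length us" "t = us ! i" by (auto simp: in_set_conv_nth)
    then show "wf_term (sig A) t" using Fun(1) qs(3) by auto
  qed
  then show ?case using states_of_run(2)[OF assms qs(1)] qs(2) by simp
qed

lemma inst_cong: "(\<forall>x\<in>vars_term t. \<alpha> x = \<beta> x) \<Longrightarrow> inst_states t \<alpha> = inst_states t \<beta>"
  by (induction t) auto

lemma inst_run:
  "(\<forall>x\<in>vars_term t. (lift (\<sigma> x), st (\<alpha> x)) \<in> (ta_move A)\<^sup>*) \<Longrightarrow>
   (lift (subst_apply t \<sigma>), inst_states t \<alpha>) \<in> (ta_move A)\<^sup>*"
proof (induction t)
  case (Var x) then show ?case by simp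
next
  case (Fun g ts)
  have "list_all2 (\<lambda>a b. (a, b) \<in> (rstep (ta_rules A))\<^sup>*)
     (map (\<lambda>t. lift (subst_apply t \<sigma>)) ts) (map (\<lambda>t. inst_states t \<alpha>) ts)"
    using Fun by (auto simp: list_all2_conv_all_nth ta_move_def)
  then show ?case using rsteps_args by (simp add: ta_move_def o_def)
qed

lemma decomp:
  assumes "wf_ta A"
  shows "linear_term l \<Longrightarrow> (lift (subst_apply l \<sigma>), st q) \<in> (ta_move A)\<^sup>* \<Longrightarrow> q \<in> states A \<Longrightarrow>
    \<exists>\<alpha>. (\<forall>x. \<alpha> x \<in> states A) \<and> (\<forall>x\<in>vars_term l. (lift (\<sigma> x), st (\<alpha> x)) \<in> (ta_move A)\<^sup>*) \<and>
        (inst_states l \<alpha>, st q) \<in> (ta_move A)\<^sup>*"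
proof (induction l arbitrary: q)
  case (Var x)
  then show ?case by (intro exI[of _ "\<lambda>_. q"]) auto
next
  case (Fun g ls)
  from dec[OF Fun(3), of g "map (\<lambda>t. lift (subst_apply t \<sigma>)) ls"] obtain qs where
    qs: "(g, qs, q) \<in> delta A" "length qs = length ls"
      "\<forall>i<length ls. (lift (subst_apply (ls ! i) \<sigma>), st (qs ! i)) \<in> (ta_move A)\<^sup>*" by auto
  have qsA: "set qs \<subseteq> states A" using states_of_run(1)[OF assms qs(1)] .
  have lin: "\<forall>i < length ls. \<forall>j < length ls. i \<noteq> j \<longrightarrow> vars_term (ls ! i) \<inter> vars_term (ls ! j) = {}"
    "\<forall>t\<in>set ls. linear_term t" using Fun(2) by auto
  have "\<forall>i. i < length ls \<longrightarrow> (\<exists>\<alpha>. (\<forall>x. \<alpha> x \<in> states A) \<and> (\<forall>x\<in>vars_term (ls ! i). (lift (\<sigma> x), st (\<alpha> x)) \<in> (ta_move A)\<^sup>*) \<and>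
        (inst_states (ls ! i) \<alpha>, st (qs ! i)) \<in> (ta_move A)\<^sup>*)"
  proof (intro allI impI)
    fix i assume i: "i < length ls"
    then have "ls ! i \<in> set ls" by simp
    moreover have "qs ! i \<in> states A" using qsA qs(2) i by auto
    ultimately show "\<exists>\<alpha>. (\<forall>x. \<alpha> x \<in> states A) \<and> (\<forall>x\<in>vars_term (ls ! i). (lift (\<sigma> x), st (\<alpha> x)) \<in> (ta_move A)\<^sup>*) \<and>
        (inst_states (ls ! i) \<alpha>, st (qs ! i)) \<in> (ta_move A)\<^sup>*"
      using Fun(1) lin(2) qs(3) i by blast
  qed
  then obtain F where F: "\<forall>i. i < length ls \<longrightarrow> (\<forall>x. F i x \<in> states A) \<and> (\<forall>x\<in>vars_term (ls ! i). (lift (\<sigma> x), st (F i x)) \<in> (ta_move A)\<^sup>*) \<and>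
        (inst_states (ls ! i) (F i), st (qs ! i)) \<in> (ta_move A)\<^sup>*"
    by (subst (asm) choice_iff') blast
  define \<alpha> where "\<alpha> x = (if \<exists>i<length ls. x \<in> vars_term (ls ! i) then F (SOME i. i<length ls \<and> x \<in> vars_term (ls ! i)) x else q)" for x
  have agree: "\<alpha> x = F i x" if "i < length ls" "x \<in> vars_term (ls ! i)" for i x
  proof -
    have ex: "\<exists>i<length ls. x \<in> vars_term (ls ! i)" using that by blast
    let ?j = "SOME i. i<length ls \<and> x \<in> vars_term (ls ! i)"
    have "?j < length ls \<and> x \<in> vars_term (ls ! ?j)" using someI_ex[OF ex] .
    then have "?j = i" using lin(1) that by blast
    then show ?thesis unfolding \<alpha>_def using ex by simp
  qed
  have \<alpha>A: "\<forall>x. \<alpha> x \<in> states A"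
  proof
    fix x show "\<alpha> x \<in> states A"
    proof (cases "\<exists>i<length ls. x \<in> vars_term (ls ! i)")
      case True
      then obtain i where "i<length ls" "x \<in> vars_term (ls ! i)" by blast
      then show ?thesis using agree F by metis
    next
      case False then show ?thesis using Fun(4) unfolding \<alpha>_def by (simp add: False)
    qed
  qed
  have vars: "\<forall>x\<in>vars_term (Fun g ls). (lift (\<sigma> x), st (\<alpha> x)) \<in> (ta_move A)\<^sup>*"
  proof
    fix x assume "x \<in> vars_term (Fun g ls)"
    then obtain i where "i<length ls" "x \<in> vars_term (ls ! i)" by (auto simp: in_set_conv_nth)
    then show "(lift (\<sigma> x), st (\<alpha> x)) \<in> (ta_move A)\<^sup>*" using agree F by metis
  qed
  have "\<forall>i<length ls. inst_states (ls ! i) \<alpha> = inst_states (ls ! i) (F i)"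
    using agree inst_cong by metis
  then have "list_all2 (\<lambda>a b. (a, b) \<in> (rstep (ta_rules A))\<^sup>*) (map (\<lambda>t. inst_states t \<alpha>) ls) (map st qs)"
    using F qs(2) by (auto simp: list_all2_conv_all_nth ta_move_def)
  then have "(inst_states (Fun g ls) \<alpha>, Fun (Inl g) (map st qs)) \<in> (ta_move A)\<^sup>*"
    using rsteps_args by (simp add: ta_move_def)
  also have "(Fun (Inl g) (map st qs), st q) \<in> (ta_move A)\<^sup>*" using ta_rule_step[OF qs(1)] by blast
  finally show ?case using \<alpha>A vars by blast
qed

lemma key:
  assumes wf: "wf_ta A" and trs: "is_trs R" and ll: "left_linear R"
    and H: "\<And>l r (\<alpha> :: 'v \<Rightarrow> 'q) q. (l, r) \<in> R \<Longrightarrow> (\<forall>x. \<alpha> x \<in> states A) \<Longrightarrow> q \<in> states A \<Longrightarrow>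
           (inst_states l \<alpha>, st q) \<in> (ta_move A)\<^sup>* \<Longrightarrow>
           \<exists>t. (l, t) \<in> (rstep R)\<^sup>+ \<and> (inst_states t \<alpha>, st q) \<in> (ta_move A)\<^sup>*"
  shows "(s, t) \<in> rstep R \<Longrightarrow> (lift s :: ('f + 'q, 'v) term, st q) \<in> (ta_move A)\<^sup>* \<Longrightarrow> q \<in> states A \<Longrightarrow>
    \<exists>s'. (s, s') \<in> (rstep R)\<^sup>+ \<and> (lift s' :: ('f + 'q, 'v) term, st q) \<in> (ta_move A)\<^sup>*"
proof (induction arbitrary: q rule: rstep.induct)
  case (root l r \<sigma>)
  have lin: "linear_term l" using ll root(1) unfolding left_linear_def by auto
  obtain \<alpha> where \<alpha>: "\<forall>x. \<alpha> x \<in> states A" "\<forall>x\<in>vars_term l. (lift (\<sigma> x), st (\<alpha> x)) \<in> (ta_move A)\<^sup>*"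
     "(inst_states l \<alpha>, st q) \<in> (ta_move A)\<^sup>*"
    using decomp[OF wf lin root(2) root(3)] by blast
  obtain t' where t': "(l, t') \<in> (rstep R)\<^sup>+" "(inst_states t' \<alpha>, st q) \<in> (ta_move A)\<^sup>*"
    using H[OF root(1) \<alpha>(1) root(3) \<alpha>(3)] by blast
  have "vars_term t' \<subseteq> vars_term l" using rsteps_vars[OF trs t'(1)] .
  then have "(lift (subst_apply t' \<sigma>) :: ('f + 'q, 'v) term, inst_states t' \<alpha>) \<in> (ta_move A)\<^sup>*"
    using inst_run \<alpha>(2) by (metis subsetD)
  then show ?case using t' rsteps_subst[OF t'(1)] by (meson rtrancl_trans)
next
  case (ctxt u u' f ss ts)
  let ?xs = "map lift ss @ lift u # map lift ts :: ('f + 'q, 'v) term list"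
  from dec[OF ctxt(3), of f ?xs] obtain qs where
    qs: "(f, qs, q) \<in> delta A" "length qs = length ?xs"
      "\<forall>i<length ?xs. (?xs ! i, st (qs ! i)) \<in> (ta_move A)\<^sup>*" by auto
  have qsA: "set qs \<subseteq> states A" using states_of_run(1)[OF wf qs(1)] .
  let ?k = "length ss"
  have "(lift u :: ('f + 'q, 'v) term, st (qs ! ?k)) \<in> (ta_move A)\<^sup>*"
    using qs(3)[rule_format, of ?k] by (simp add: nth_append)
  moreover have "qs ! ?k \<in> states A" using qsA qs(2) by auto
  ultimately obtain u'' where u'': "(u, u'') \<in> (rstep R)\<^sup>+" "(lift u'' :: ('f + 'q, 'v) term, st (qs ! ?k)) \<in> (ta_move A)\<^sup>*"
    using ctxt(2) by blast
  let ?ys = "map lift ss @ lift u'' # map lift ts :: ('f + 'q, 'v) term list"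
  have "list_all2 (\<lambda>a b. (a, b) \<in> (rstep (ta_rules A))\<^sup>*) ?ys (map st qs)"
    unfolding list_all2_conv_all_nth
  proof (intro conjI allI impI)
    show "length ?ys = length (map st qs)" using qs(2) by simp
    fix i assume i: "i < length ?ys"
    show "(?ys ! i, map st qs ! i) \<in> (rstep (ta_rules A))\<^sup>*"
    proof (cases "i = ?k")
      case True then show ?thesis using u''(2) qs(2) by (simp add: nth_append ta_move_def)
    next
      case False
      then have "?ys ! i = ?xs ! i" by (auto simp: nth_append nth_Cons' split: if_splits)
      then show ?thesis using qs(3) qs(2) i by (simp add: ta_move_def)
    qed
  qed
  then have "(Fun (Inl f) ?ys, Fun (Inl f) (map st qs)) \<in> (ta_move A)\<^sup>*"
    using rsteps_args by (simp add: ta_move_def)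
  also have "(Fun (Inl f) (map st qs), st q) \<in> (ta_move A)\<^sup>*" using ta_rule_step[OF qs(1)] by blast
  finally have "(lift (Fun f (ss @ u'' # ts)) :: ('f + 'q, 'v) term, st q) \<in> (ta_move A)\<^sup>*" by simp
  then show ?case using rsteps_ctxt[OF u''(1)] by blast
qed

theorem mainTheorem3:
  fixes A :: "('q, 'f) ta" and R :: "(('f, 'v) term \<times> ('f, 'v) term) set"
  assumes "wf_ta A"
    and "is_trs R" and "trs_over (sig A) R" and "left_linear R"
    and "\<And>l r (\<alpha> :: 'v \<Rightarrow> 'q) q. (l, r) \<in> R \<Longrightarrow> (\<forall>x. \<alpha> x \<in> states A) \<Longrightarrow> q \<in> states A \<Longrightarrow>
           (inst_states l \<alpha>, st q) \<in> (ta_move A)\<^sup>* \<Longrightarrow>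
           \<exists>t. (l, t) \<in> (rstep R)\<^sup>+ \<and> (inst_states t \<alpha>, st q) \<in> (ta_move A)\<^sup>*"
  shows "weakly_closed (lang A :: ('f, 'v) term set) R"
  unfolding weakly_closed_def
proof (intro ballI impI)
  fix s :: "('f, 'v) term" assume s: "s \<in> lang A" and nf: "s \<notin> NF (rstep R)"
  from nf obtain t where st: "(s, t) \<in> rstep R" by (auto simp: NF_def)
  from s obtain q where q: "q \<in> final A" "(lift s :: ('f + 'q, 'v) term, st q) \<in> (ta_move A)\<^sup>*" "ground s"
    by (auto simp: lang_def)
  have qA: "q \<in> states A" using assms(1) q(1) unfolding wf_ta_def by auto
  obtain s' where s': "(s, s') \<in> (rstep R)\<^sup>+" "(lift s' :: ('f + 'q, 'v) term, st q) \<in> (ta_move A)\<^sup>*"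
  proof -
    have "\<exists>s'. (s, s') \<in> (rstep R)\<^sup>+ \<and> (lift s' :: ('f + 'q, 'v) term, st q) \<in> (ta_move A)\<^sup>*"
      by (rule key[OF assms(1,2,4) _ st q(2) qA]) (use assms(5) in blast)
    then show ?thesis using that by blast
  qed
  have "ground s'" using rsteps_vars[OF assms(2) s'(1)] q(3) by (auto simp: ground_def)
  moreover have "wf_term (sig A) s'" using run_wf[OF assms(1) s'(2)] .
  ultimately have "s' \<in> lang A" using s'(2) q(1) by (auto simp: lang_def)
  then show "\<exists>s'\<in>lang A. (s, s') \<in> (rstep R)\<^sup>+" using s'(1) by blast
qed

end
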